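(* Let $B=\bigoplus_{i\in\mathbb{Z}}\mathbb{Z}_2$, let $m\ge1$, let $S_m$ be the set of $0/1$ sequences of length $m$, and let $\pi$ be any permutation of $S_m$. Define $\psi:B\to B$ by applying $\pi$ to the subsequence $(x_0,\dots,x_{m-1})$ of $x=(x_i)$ and leaving all other coordinates unchanged. Then $\psi$ is a bijection which is biLipschitz with respect to both $d_\ell$ and $d_u$, with biLipschitz constants at most $2^m$; i.e. $2^{-m}d(p,q)\le d(\psi(p),\psi(q))\le 2^m d(p,q)$ for all $p,q\in B$ and $d\in\{d_\ell,d_u\}$.
   Context: For distinct $p=(x_i),q=(y_i)\in B$: $d_\ell(p,q)=2^{-l_+}$ where $l_+$ is the smallest integer with $x_{l_+}\neq y_{l_+}$, and $d_u(p,q)=2^{l_-}$ where $l_-$ is the largest integer with $x_{l_-}\neq y_{l_-}$; $d_\ell(p,p)=d_u(p,p)=0$. (These are the metrics on the lower and upper boundaries of the Diestel–Leader graph $DL(2,2)$ restricted to $B$.) *)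

theory Defs
  imports Complex_Main "HOL-Combinatorics.Permutations"
begin

text \<open>The group B = direct sum over i in Z of Z_2, as finitely supported
  Z_2-valued (here: bool-valued) sequences indexed by the integers.\<close>
definition B :: "(int \<Rightarrow> bool) set" where
  "B = {x. finite {i. x i}}"

definition S :: "nat \<Rightarrow> bool list set" where
  "S m = {xs. length xs = m}"

definition psi :: "nat \<Rightarrow> (bool list \<Rightarrow> bool list) \<Rightarrow> (int \<Rightarrow> bool) \<Rightarrow> (int \<Rightarrow> bool)" where
  "psi m \<pi> x = (\<lambda>i. if 0 \<le> i \<and> i < int m
                      then (\<pi> (map (\<lambda>j. x (int j)) [0..<m])) ! nat i
                      else x i)"

definition d_l :: "(int \<Rightarrow> bool) \<Rightarrow> (int \<Rightarrow> bool) \<Rightarrow> real" where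
  "d_l p q = (if p = q then 0 else 2 powi (- Min {i. p i \<noteq> q i}))"

definition d_u :: "(int \<Rightarrow> bool) \<Rightarrow> (int \<Rightarrow> bool) \<Rightarrow> real" where
  "d_u p q = (if p = q then 0 else 2 powi (Max {i. p i \<noteq> q i}))"

end

theory Submission
  imports Defs
begin

definition blk :: "nat \<Rightarrow> (int \<Rightarrow> bool) \<Rightarrow> bool list" where
  "blk m x = map (\<lambda>j. x (int j)) [0..<m]"

lemma blk_nth: "0 \<le> i \<Longrightarrow> i < int m \<Longrightarrow> blk m x ! nat i = x i"
proof -
  assume a: "0 \<le> i" "i < int m"
  then have "nat i < m" by linarith
  then show ?thesis using a by (simp add: blk_def)
qed

lemma psi_out: "i < 0 \<or> i \<ge> int m \<Longrightarrow> psi m \<pi> x i = x i"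
  by (auto simp: psi_def)

lemma psi_in: "0 \<le> i \<Longrightarrow> i < int m \<Longrightarrow> psi m \<pi> x i = \<pi> (blk m x) ! nat i"
  by (auto simp: psi_def blk_def)

lemma len_pi: assumes "\<pi> permutes S m" shows "length (\<pi> xs) = length xs \<or> length xs \<noteq> m"
proof -
  have "length xs = m \<Longrightarrow> \<pi> xs \<in> S m"
    using permutes_in_image[OF assms] by (simp add: S_def)
  then show ?thesis by (auto simp: S_def)
qed

lemma blk_psi: assumes "\<pi> permutes S m" shows "blk m (psi m \<pi> x) = \<pi> (blk m x)"
proof -
  have l: "length (\<pi> (blk m x)) = m" using len_pi[OF assms, of "blk m x"] by (simp add: blk_def)
  show ?thesis
    apply (rule nth_equalityI)
    using l by (auto simp: blk_def psi_def)
qed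

lemma psi_inv: assumes "\<pi> permutes S m" shows "psi m (inv \<pi>) (psi m \<pi> x) = x"
proof
  fix i
  show "psi m (inv \<pi>) (psi m \<pi> x) i = x i"
  proof (cases "0 \<le> i \<and> i < int m")
    case True
    have "inv \<pi> (blk m (psi m \<pi> x)) = blk m x"
      using blk_psi[OF assms] permutes_inverses(2)[OF assms] by simp
    moreover have "psi m (inv \<pi>) (psi m \<pi> x) i = inv \<pi> (blk m (psi m \<pi> x)) ! nat i"
      using True by (intro psi_in) auto
    ultimately show ?thesis using True blk_nth[of i m x] by simp
  next
    case False
    then have "i < 0 \<or> i \<ge> int m" by linarith
    then show ?thesis by (simp add: psi_out)
  qed
qed

lemma blk_diff: "blk m p \<noteq> blk m q \<longleftrightarrow> (\<exists>i. 0 \<le> i \<and> i < int m \<and> p i \<noteq> q i)"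
proof
  assume "blk m p \<noteq> blk m q"
  then obtain j where "j < m" "p (int j) \<noteq> q (int j)"
    unfolding blk_def list_eq_iff_nth_eq by auto
  then show "\<exists>i. 0 \<le> i \<and> i < int m \<and> p i \<noteq> q i" by (intro exI[of _ "int j"]) auto
next
  assume "\<exists>i. 0 \<le> i \<and> i < int m \<and> p i \<noteq> q i"
  then obtain i where "0 \<le> i" "i < int m" "p i \<noteq> q i" by blast
  then have "blk m p ! nat i \<noteq> blk m q ! nat i" by (simp add: blk_nth)
  then show "blk m p \<noteq> blk m q" by metis
qed

lemma psi_B: "x \<in> B \<Longrightarrow> psi m \<pi> x \<in> B"
proof -
  assume "x \<in> B"
  have "{i. psi m \<pi> x i} \<subseteq> {i. x i} \<union> {0..<int m}" by (auto simp: psi_def)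
  then show ?thesis using \<open>x \<in> B\<close> unfolding B_def by (auto intro: finite_subset)
qed

lemma diff_props:
  assumes perm: "\<pi> permutes S m"
  shows "(\<forall>i. (i < 0 \<or> i \<ge> int m) \<longrightarrow> (psi m \<pi> p i \<noteq> psi m \<pi> q i \<longleftrightarrow> p i \<noteq> q i))
     \<and> ((\<exists>i. 0 \<le> i \<and> i < int m \<and> psi m \<pi> p i \<noteq> psi m \<pi> q i) \<longleftrightarrow> (\<exists>i. 0 \<le> i \<and> i < int m \<and> p i \<noteq> q i))"
proof -
  have inj: "inj \<pi>" using perm permutes_inj by blast
  have "blk m (psi m \<pi> p) \<noteq> blk m (psi m \<pi> q) \<longleftrightarrow> blk m p \<noteq> blk m q"
    using blk_psi[OF perm] inj by (simp add: inj_eq)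
  then show ?thesis by (simp add: psi_out blk_diff)
qed

lemma finD: "p \<in> B \<Longrightarrow> q \<in> B \<Longrightarrow> finite {i. p i \<noteq> q i}"
  unfolding B_def by (rule finite_subset[of _ "{i. p i} \<union> {i. q i}"]) auto

lemma dl_upper:
  assumes perm: "\<pi> permutes S m" and p: "p \<in> B" and q: "q \<in> B"
  shows "d_l (psi m \<pi> p) (psi m \<pi> q) \<le> 2 ^ m * d_l p q"
proof (cases "p = q")
  case True then show ?thesis by (simp add: d_l_def)
next
  case False
  then have ne: "psi m \<pi> p \<noteq> psi m \<pi> q" using psi_inv[OF perm] by metis
  let ?D = "{i. p i \<noteq> q i}" and ?E = "{i. psi m \<pi> p i \<noteq> psi m \<pi> q i}"
  have fD: "finite ?D" by (rule finD[OF p q])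
  have fE: "finite ?E" by (rule finD[OF psi_B[OF p] psi_B[OF q]])
  have nE: "?E \<noteq> {}" using ne by auto
  have jE: "Min ?E \<in> ?E" using fE nE by (rule Min_in)
  have key: "Min ?D \<le> Min ?E + int m"
  proof (cases "Min ?E < 0 \<or> Min ?E \<ge> int m")
    case True
    then have "Min ?E \<in> ?D" using diff_props[OF perm, of p q] jE by auto
    then show ?thesis using fD by (meson Min_le add_increasing2 of_nat_0_le_iff order_trans)
  next
    case False
    then obtain k where "0 \<le> k" "k < int m" "k \<in> ?D" using diff_props[OF perm, of p q] jE by auto
    then have "Min ?D \<le> k" using fD by auto
    then show ?thesis using \<open>k < int m\<close> False by linarith
  qed
  have "d_l (psi m \<pi> p) (psi m \<pi> q) = 2 powi (- Min ?E)" using ne by (simp add: d_l_def)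
  also have "\<dots> \<le> 2 powi (int m - Min ?D)" by (rule power_int_increasing) (use key in auto)
  also have "\<dots> = 2 powi (int m) * 2 powi (- Min ?D)" using power_int_add[of "2::real" "int m" "- Min ?D"] by simp
  also have "\<dots> = 2 ^ m * d_l p q" using False by (simp add: d_l_def)
  finally show ?thesis .
qed

lemma du_upper:
  assumes perm: "\<pi> permutes S m" and p: "p \<in> B" and q: "q \<in> B"
  shows "d_u (psi m \<pi> p) (psi m \<pi> q) \<le> 2 ^ m * d_u p q"
proof (cases "p = q")
  case True then show ?thesis by (simp add: d_u_def)
next
  case False
  then have ne: "psi m \<pi> p \<noteq> psi m \<pi> q" using psi_inv[OF perm] by metis
  let ?D = "{i. p i \<noteq> q i}" and ?E = "{i. psi m \<pi> p i \<noteq> psi m \<pi> q i}"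
  have fD: "finite ?D" by (rule finD[OF p q])
  have fE: "finite ?E" by (rule finD[OF psi_B[OF p] psi_B[OF q]])
  have nE: "?E \<noteq> {}" using ne by auto
  have jE: "Max ?E \<in> ?E" using fE nE by (rule Max_in)
  have key: "Max ?E \<le> Max ?D + int m"
  proof (cases "Max ?E < 0 \<or> Max ?E \<ge> int m")
    case True
    then have "Max ?E \<in> ?D" using diff_props[OF perm, of p q] jE by auto
    then have "Max ?E \<le> Max ?D" using fD by auto
    then show ?thesis by linarith
  next
    case False
    then obtain k where "0 \<le> k" "k < int m" "k \<in> ?D" using diff_props[OF perm, of p q] jE by auto
    then have "k \<le> Max ?D" using fD by auto
    then show ?thesis using \<open>0 \<le> k\<close> False by linarith
  qed
  have "d_u (psi m \<pi> p) (psi m \<pi> q) = 2 powi (Max ?E)" using ne by (simp add: d_u_def)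
  also have "\<dots> \<le> 2 powi (int m + Max ?D)" by (rule power_int_increasing) (use key in auto)
  also have "\<dots> = 2 powi (int m) * 2 powi (Max ?D)" by (simp add: power_int_add)
  also have "\<dots> = 2 ^ m * d_u p q" using False by (simp add: d_u_def)
  finally show ?thesis .
qed

lemma both_upper:
  assumes perm: "\<pi> permutes S m" and p: "p \<in> B" and q: "q \<in> B" and d: "d \<in> {d_l, d_u}"
  shows "d (psi m \<pi> p) (psi m \<pi> q) \<le> 2 ^ m * d p q"
  using d dl_upper[OF assms(1-3)] du_upper[OF assms(1-3)] by auto

theorem mainTheorem6:
  fixes m :: nat and \<pi> :: "bool list \<Rightarrow> bool list"
  assumes "m \<ge> 1" and "\<pi> permutes S m"
  shows "bij_betw (psi m \<pi>) B B \<and>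
    (\<forall>d \<in> {d_l, d_u}. \<forall>p \<in> B. \<forall>q \<in> B.
       (1 / 2 ^ m) * d p q \<le> d (psi m \<pi> p) (psi m \<pi> q) \<and>
       d (psi m \<pi> p) (psi m \<pi> q) \<le> 2 ^ m * d p q)"
proof -
  have perm: "\<pi> permutes S m" by fact
  have iperm: "inv \<pi> permutes S m" using permutes_inv[OF perm] .
  have inv2: "psi m \<pi> (psi m (inv \<pi>) x) = x" for x
    using psi_inv[OF iperm, of x] inv_inv_eq[OF permutes_bij[OF perm]] by simp
  have bij: "bij_betw (psi m \<pi>) B B"
    by (rule bij_betwI[where g = "psi m (inv \<pi>)"]) (auto simp: psi_B psi_inv[OF perm] inv2)
  have "(1 / 2 ^ m) * d p q \<le> d (psi m \<pi> p) (psi m \<pi> q) \<and>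
       d (psi m \<pi> p) (psi m \<pi> q) \<le> 2 ^ m * d p q"
    if d: "d \<in> {d_l, d_u}" and p: "p \<in> B" and q: "q \<in> B" for d p q
  proof
    show "d (psi m \<pi> p) (psi m \<pi> q) \<le> 2 ^ m * d p q" by (rule both_upper[OF perm p q d])
    have "d p q = d (psi m (inv \<pi>) (psi m \<pi> p)) (psi m (inv \<pi>) (psi m \<pi> q))"
      by (simp add: psi_inv[OF perm])
    also have "\<dots> \<le> 2 ^ m * d (psi m \<pi> p) (psi m \<pi> q)"
      by (rule both_upper[OF iperm psi_B[OF p] psi_B[OF q] d])
    finally show "(1 / 2 ^ m) * d p q \<le> d (psi m \<pi> p) (psi m \<pi> q)"
      by (simp add: field_simps)
  qed
  then show ?thesis using bij by blast
qed

end
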